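(* The function $y\mapsto h(e^{y})$ is concave on the interval $(-\infty,\ln(1/2)]$.
   Context: $h(t)=(1-t)\left[\psi-\left(\frac{t}{1-t}\right)^{\chi}\right]$ for $t\in[0,1/2]$, with $\psi=13/10$ and $\chi=1/2$. *)

theory Defs
  imports "HOL-Analysis.Analysis"
begin

definition psi :: real where "psi = 13/10"
definition chi :: real where "chi = 1/2"

definition h :: "real \<Rightarrow> real" where
  "h t = (1 - t) * (psi - (t / (1 - t)) powr chi)"

end

theory Submission
  imports Defs
begin

definition g :: "real \<Rightarrow> real" where
  "g x = psi*(1 - exp x) - sqrt(exp x - exp x ^ 2)"
definition g1 :: "real \<Rightarrow> real" where
  "g1 x = -psi*exp x - (exp x - 2*exp x ^ 2)/(2* sqrt(exp x - exp x ^ 2))"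
definition g2 :: "real \<Rightarrow> real" where
  "g2 x = -psi*exp x - exp x ^ 2*(1 - 6*exp x + 4*exp x ^ 2)/(4*(exp x - exp x ^ 2)* sqrt(exp x - exp x ^ 2))"

lemma exp_le_half: "(x::real) \<le> ln (1/2) \<Longrightarrow> exp x \<le> 1/2"
proof -
  assume "x \<le> ln (1/2)"
  then have "exp x \<le> exp (ln (1/2))" by (simp only: exp_le_cancel_iff)
  moreover have "exp (ln (1/2::real)) = 1/2" by (rule exp_ln) simp
  ultimately show ?thesis by linarith
qed

lemma D_pos: fixes x :: real assumes "exp x \<le> 1/2" shows "exp x - exp x ^ 2 > 0"
proof -
  have "exp x > 0" by simp
  moreover have "exp x < 1" using assms by linarith
  ultimately have "exp x * exp x < exp x * 1" by (intro mult_strict_left_mono)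
  then have "exp x ^ 2 < exp x" by (simp add: power2_eq_square)
  then show ?thesis by simp
qed

lemma h_eq: fixes x :: real assumes "exp x \<le> 1/2" shows "h (exp x) = g x"
proof -
  define t where "t = exp x"
  have t0: "t > 0" and t1: "t \<le> 1/2" using assms by (auto simp: t_def)
  have "(t/(1-t)) powr chi = sqrt (t/(1-t))"
    unfolding chi_def using t0 t1 by (intro powr_half_sqrt) simp
  moreover have "(1-t) * sqrt (t/(1-t)) = sqrt (t - t^2)"
  proof -
    have "(1-t) = sqrt ((1-t)^2)" using t1 by simp
    then have "(1-t) * sqrt (t/(1-t)) = sqrt ((1-t)^2 * (t/(1-t)))"
      by (metis real_sqrt_mult)
    also have "(1-t)^2 * (t/(1-t)) = t - t^2" using t1 by (simp add: field_simps power2_eq_square)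
    finally show ?thesis .
  qed
  ultimately show ?thesis unfolding h_def g_def t_def[symmetric] by (simp add: algebra_simps)
qed

lemma dS: fixes x :: real assumes "exp x \<le> 1/2"
  shows "((\<lambda>x. sqrt (exp x - exp x ^ 2)) has_real_derivative (exp x - 2*exp x ^ 2)/(2 * sqrt(exp x - exp x ^ 2))) (at x)"
proof -
  have D: "exp x - exp x ^ 2 > 0" using D_pos[OF assms] .
  have a: "(sqrt has_real_derivative inverse (sqrt (exp x - exp x ^ 2)) / 2) (at (exp x - exp x ^ 2))"
    using DERIV_real_sqrt[OF D] .
  have b: "((\<lambda>x. exp x - exp x ^ 2) has_real_derivative (exp x - 2*exp x ^ 2)) (at x)"
    by (auto intro!: derivative_eq_intros simp: power2_eq_square)
  have "((\<lambda>x. sqrt (exp x - exp x ^ 2)) has_real_derivative (inverse (sqrt (exp x - exp x ^ 2)) / 2) * (exp x - 2*exp x ^ 2)) (at x)"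
    using DERIV_chain2[OF a b] .
  then show ?thesis by (simp add: field_simps)
qed

lemma d1: fixes x :: real assumes "exp x \<le> 1/2" shows "(g has_real_derivative g1 x) (at x)"
proof -
  have a: "((\<lambda>x. psi*(1 - exp x)) has_real_derivative -psi*exp x) (at x)"
    by (auto intro!: derivative_eq_intros)
  show ?thesis unfolding g_def[abs_def] g1_def
    using DERIV_diff[OF a dS[OF assms]] by simp
qed

lemma d2: fixes x :: real assumes "exp x \<le> 1/2" shows "(g1 has_real_derivative g2 x) (at x)"
proof -
  have D: "exp x - exp x ^ 2 > 0" using D_pos[OF assms] .
  have s: "sqrt (exp x - exp x ^ 2) ^ 2 = exp x - exp x ^ 2" using D by simp
  have sp: "sqrt (exp x - exp x ^ 2) > 0" using D by simp
  have a: "((\<lambda>x. -psi*exp x) has_real_derivative -psi*exp x) (at x)"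
    by (auto intro!: derivative_eq_intros)
  have n: "((\<lambda>x. exp x - 2*exp x ^ 2) has_real_derivative (exp x - 4*exp x ^ 2)) (at x)"
    by (auto intro!: derivative_eq_intros simp: power2_eq_square)
  have d: "((\<lambda>x. 2 * sqrt (exp x - exp x ^ 2)) has_real_derivative 2 * ((exp x - 2*exp x ^ 2)/(2 * sqrt(exp x - exp x ^ 2)))) (at x)"
    using DERIV_cmult[OF dS[OF assms], of 2] .
  have q: "((\<lambda>x. (exp x - 2*exp x ^ 2)/(2 * sqrt(exp x - exp x ^ 2))) has_real_derivative
     ((exp x - 4*exp x ^ 2) * (2 * sqrt (exp x - exp x ^ 2)) - (exp x - 2*exp x ^ 2) * (2 * ((exp x - 2*exp x ^ 2)/(2 * sqrt(exp x - exp x ^ 2))))) / ((2 * sqrt (exp x - exp x ^ 2)) * (2 * sqrt (exp x - exp x ^ 2)))) (at x)"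
    using DERIV_divide[OF n d] sp by simp
  have "(g1 has_real_derivative (-psi*exp x - ((exp x - 4*exp x ^ 2) * (2 * sqrt (exp x - exp x ^ 2)) - (exp x - 2*exp x ^ 2) * (2 * ((exp x - 2*exp x ^ 2)/(2 * sqrt(exp x - exp x ^ 2))))) / ((2 * sqrt (exp x - exp x ^ 2)) * (2 * sqrt (exp x - exp x ^ 2))))) (at x)"
    unfolding g1_def[abs_def] using DERIV_diff[OF a q] by simp
  moreover have "(-psi*exp x - ((exp x - 4*exp x ^ 2) * (2 * sqrt (exp x - exp x ^ 2)) - (exp x - 2*exp x ^ 2) * (2 * ((exp x - 2*exp x ^ 2)/(2 * sqrt(exp x - exp x ^ 2))))) / ((2 * sqrt (exp x - exp x ^ 2)) * (2 * sqrt (exp x - exp x ^ 2)))) = g2 x"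
  proof -
    define u where "u = exp x"
    define r where "r = sqrt (exp x - exp x ^ 2)"
    have r2: "r^2 = u - u^2" and rp: "r > 0" and Dp: "u - u^2 > 0" using s sp D by (auto simp: u_def r_def)
    have main: "- psi * u - ((u - 4*u^2) * (2*r) - (u - 2*u^2) * (2 * ((u - 2*u^2)/(2*r)))) / (2*r * (2*r)) =
            - psi * u - u^2*(1 - 6*u + 4*u^2)/(4*(u - u^2)*r)"
    proof -
      have rr: "r * r = u - u^2" using r2 by (simp add: power2_eq_square)
      have b: "(u - 4*u^2) * (2*r) - (u - 2*u^2) * (2 * ((u - 2*u^2)/(2*r))) = u^2*(1 - 6*u + 4*u^2)/r"
      proof -
        have "(u - 4*u^2) * (2*r) - (u - 2*u^2) * (2 * ((u - 2*u^2)/(2*r))) = ((u - 4*u^2) * 2 * (r*r) - (u - 2*u^2)^2)/r"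
          using rp by (simp add: field_simps power2_eq_square)
        also have "\<dots> = u^2*(1 - 6*u + 4*u^2)/r" unfolding rr by (simp add: algebra_simps power2_eq_square)
        finally show ?thesis .
      qed
      show ?thesis
        unfolding b rr[symmetric] using rp by (simp add: field_simps)
    qed
    show ?thesis unfolding g2_def using main by (simp only: u_def r_def)
  qed
  ultimately show ?thesis by simp
qed

lemma aux: "(X::real) = c*P \<Longrightarrow> c*Q = p*w \<Longrightarrow> -p*w - X = -c*(P+Q)"
  by (simp add: algebra_simps)

lemma g2_le: fixes x :: real assumes "exp x \<le> 1/2" shows "g2 x \<le> 0"
proof -
  define u where "u = exp x"
  define r where "r = sqrt (u - u^2)"
  have u0: "u > 0" and u1: "u \<le> 1/2" using assms by (auto simp: u_def)
  have D: "u - u^2 > 0" using D_pos[OF assms] by (simp add: u_def)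
  have rp: "r > 0" using D by (simp add: r_def)
  have ru: "u \<le> r"
  proof -
    have "u * u \<le> u - u^2" using u0 u1 by (simp add: power2_eq_square)
    then have "sqrt (u^2) \<le> sqrt (u - u^2)" by (intro real_sqrt_le_mono) (simp add: power2_eq_square)
    moreover have "sqrt (u^2) = u" using u0 by simp
    ultimately show ?thesis unfolding r_def by simp
  qed
  have p: "4*psi*(1-u)*r \<ge> 2.6 * r"
  proof -
    have "2.6 \<le> 4*psi*(1-u)" unfolding psi_def using u1 by simp
    from mult_right_mono[OF this, of r] rp show ?thesis by simp
  qed
  have key: "0 \<le> (1 - 6*u + 4*u^2) + 4*psi*(1-u)*r"
  proof -
    have "0 \<le> (1 - 2*u)^2" by simp
    then have "0 \<le> (1 - 6*u + 4*u^2) + 2*u" by (simp add: power2_eq_square algebra_simps)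
    then show ?thesis using p ru u0 by linarith
  qed
  have eq: "g2 x = -(u/(4*(1-u)*r)) * ((1 - 6*u + 4*u^2) + 4*psi*(1-u)*r)"
  proof -
    have "g2 x = -psi*u - u^2*(1 - 6*u + 4*u^2)/(4*(u - u^2)*r)"
      unfolding g2_def u_def r_def ..
    also have "\<dots> = -(u/(4*(1-u)*r)) * ((1 - 6*u + 4*u^2) + 4*psi*(1-u)*r)"
    proof -
      have d: "u - u^2 = u*(1-u)" by (simp add: power2_eq_square algebra_simps)
      have n: "1 - u \<noteq> 0" using u1 by simp
      have "u^2*(1 - 6*u + 4*u^2)/(4*(u - u^2)*r) = (u/(4*(1-u)*r)) * (1 - 6*u + 4*u^2)"
        unfolding d using u0 rp n by (simp add: power2_eq_square)
      moreover have "(u/(4*(1-u)*r)) * (4*psi*(1-u)*r) = psi*u" using u0 rp n by (simp add: field_simps)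
      ultimately show ?thesis by (rule aux)
    qed
    finally show ?thesis .
  qed
  have c0: "u/(4*(1-u)*r) \<ge> 0" using u0 u1 rp by simp
  show ?thesis unfolding eq mult_minus_left using mult_nonneg_nonneg[OF c0 key] by linarith
qed

lemma concave_g: "concave_on {..ln (1/2)} g"
proof (rule f''_le0_imp_concave[where f'=g1 and f''=g2])
  show "convex {..ln (1/2::real)}" by simp
qed (auto intro: d1 d2 g2_le exp_le_half)

theorem lemma45:
  shows "concave_on {..ln (1/2)} (\<lambda>y. h (exp y))"
proof -
  have eqv: "\<And>y. y \<in> {..ln (1/2)} \<Longrightarrow> h (exp y) = g y"
    by (rule h_eq, rule exp_le_half) simp
  have cv: "convex {..ln (1/2::real)}" by simp
  show ?thesis unfolding concave_on_iff
  proof (intro conjI cv ballI allI impI)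
    fix x y u v :: real
    assume xy: "x \<in> {..ln (1/2)}" "y \<in> {..ln (1/2)}" and uv: "0 \<le> u" "0 \<le> v" "u + v = 1"
    have m: "u *\<^sub>R x + v *\<^sub>R y \<in> {..ln (1/2)}"
      using convexD[OF cv xy uv] .
    show "u * h (exp x) + v * h (exp y) \<le> h (exp (u *\<^sub>R x + v *\<^sub>R y))"
      using concave_onD[OF concave_g, of v x y] xy uv m eqv
      by (metis add_diff_cancel_right' le_add_same_cancel2)
  qed
qed

end
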